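(* Let $B$ be any group. Suppose $w\in (B\wr C_2)'$ is given by the wreath recursion $w=(r_1,\ r_1^{-1}[f,g])$ with $r_1,f,g\in B$. Put $a_{2,1}=(f^{-1})^{r_1^{-1}}$, $a_{2,2}=r_1a_{2,1}$, $a_{1,2}=g^{a_{2,2}^{-1}}$. Then $w=[(e,a_{1,2})\sigma,\ (a_{2,1},a_{2,2})]$.
   Context: $C_2=\langle\sigma\rangle$, $\sigma=(1,2)$ acting on $\{1,2\}$. Elements of $B\wr C_2=B^2\rtimes C_2$ are written $(b_1,b_2)\tau$, with multiplication $(g_1,g_2)\tau\cdot(h_1,h_2)\rho=(g_1h_{\tau(1)},g_2h_{\tau(2)})\tau\rho$; $(b_1,b_2)$ denotes an element with trivial $C_2$-part. Conventions: $[a,b]=aba^{-1}b^{-1}$ and $a^b=bab^{-1}$. *)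

theory Defs
  imports "HOL-Algebra.Algebra"
begin

text \<open>An element (b1,b2)tau is encoded as
  ((b1,b2), t) where t = True means tau = sigma = (1,2) and t = False means tau = id.\<close>

definition wreath_C2 :: "('a, 'b) monoid_scheme \<Rightarrow> (('a \<times> 'a) \<times> bool) monoid" where
  "wreath_C2 B = \<lparr> carrier = (carrier B \<times> carrier B) \<times> UNIV,
     monoid.mult = (\<lambda>((g1, g2), t) ((h1, h2), r).
               ((g1 \<otimes>\<^bsub>B\<^esub> (if t then h2 else h1), g2 \<otimes>\<^bsub>B\<^esub> (if t then h1 else h2)), t \<noteq> r)),
     one = ((\<one>\<^bsub>B\<^esub>, \<one>\<^bsub>B\<^esub>), False) \<rparr>"

text \<open>Commutator [a,b] = a b a^-1 b^-1 and conjugation a^b = b a b^-1 (paper's conventions).\<close>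

definition commutator :: "('a, 'b) monoid_scheme \<Rightarrow> 'a \<Rightarrow> 'a \<Rightarrow> 'a" where
  "commutator G a b = a \<otimes>\<^bsub>G\<^esub> b \<otimes>\<^bsub>G\<^esub> inv\<^bsub>G\<^esub> a \<otimes>\<^bsub>G\<^esub> inv\<^bsub>G\<^esub> b"

definition conjugate :: "('a, 'b) monoid_scheme \<Rightarrow> 'a \<Rightarrow> 'a \<Rightarrow> 'a" where
  "conjugate G a b = b \<otimes>\<^bsub>G\<^esub> a \<otimes>\<^bsub>G\<^esub> inv\<^bsub>G\<^esub> b"

end

theory Submission
  imports Defs
begin

lemma (in group) canc1 [simp]:
  "x \<in> carrier G \<Longrightarrow> y \<in> carrier G \<Longrightarrow> x \<otimes> (inv x \<otimes> y) = y"
  by (simp add: m_assoc[symmetric])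
lemma (in group) canc2 [simp]:
  "x \<in> carrier G \<Longrightarrow> y \<in> carrier G \<Longrightarrow> inv x \<otimes> (x \<otimes> y) = y"
  by (simp add: m_assoc[symmetric])

lemma wr_monoid:
  assumes "group B"
  shows "monoid (wreath_C2 B)"
proof -
  interpret group B by fact
  show ?thesis
    apply (rule monoidI)
    apply (auto simp: wreath_C2_def m_assoc split: if_splits)
    done
qed

lemma wr_inv:
  assumes "group B" and "x1 \<in> carrier B" "x2 \<in> carrier B"
  shows "inv\<^bsub>wreath_C2 B\<^esub> ((x1, x2), t) =
     (if t then ((inv\<^bsub>B\<^esub> x2, inv\<^bsub>B\<^esub> x1), True) else ((inv\<^bsub>B\<^esub> x1, inv\<^bsub>B\<^esub> x2), False))"
proof -
  interpret group B by fact
  interpret W: monoid "wreath_C2 B" by (rule wr_monoid[OF assms(1)])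
  show ?thesis
    apply (rule sym, rule W.inv_unique')
    using assms(2,3) by (auto simp: wreath_C2_def)
qed

theorem mainTheorem4:
  fixes B :: "('a, 'b) monoid_scheme" and r1 f g :: 'a
  assumes "group B"
    and "r1 \<in> carrier B" and "f \<in> carrier B" and "g \<in> carrier B"
    and "w = ((r1, inv\<^bsub>B\<^esub> r1 \<otimes>\<^bsub>B\<^esub> commutator B f g), False)"
    and "w \<in> derived (wreath_C2 B) (carrier (wreath_C2 B))"
    and "a21 = conjugate B (inv\<^bsub>B\<^esub> f) (inv\<^bsub>B\<^esub> r1)"
    and "a22 = r1 \<otimes>\<^bsub>B\<^esub> a21"
    and "a12 = conjugate B g (inv\<^bsub>B\<^esub> a22)"
  shows "w = commutator (wreath_C2 B) ((\<one>\<^bsub>B\<^esub>, a12), True) ((a21, a22), False)"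
proof -
  interpret group B by fact
  have c: "a21 \<in> carrier B" "a22 \<in> carrier B" "a12 \<in> carrier B"
    using assms by (auto simp: conjugate_def)
  have a22: "a22 = inv\<^bsub>B\<^esub> f \<otimes>\<^bsub>B\<^esub> r1"
    using assms by (simp add: conjugate_def m_assoc[symmetric])
  have e1: "a22 \<otimes>\<^bsub>B\<^esub> inv\<^bsub>B\<^esub> a21 = r1"
    using assms c by (simp add: m_assoc)
  have ia22: "inv\<^bsub>B\<^esub> a22 = inv\<^bsub>B\<^esub> r1 \<otimes>\<^bsub>B\<^esub> f" using a22 assms by (simp add: inv_mult_group)
  have e2: "a22 \<otimes>\<^bsub>B\<^esub> a21 \<otimes>\<^bsub>B\<^esub> inv\<^bsub>B\<^esub> a22 = inv\<^bsub>B\<^esub> f"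
  proof -
    have "r1 \<otimes>\<^bsub>B\<^esub> (inv\<^bsub>B\<^esub> r1 \<otimes>\<^bsub>B\<^esub> f) = f"
      using assms by (simp add: m_assoc[symmetric])
    then show ?thesis
      unfolding ia22 using assms a22 by (simp add: conjugate_def m_assoc)
  qed
  have e3: "a12 \<otimes>\<^bsub>B\<^esub> a21 \<otimes>\<^bsub>B\<^esub> inv\<^bsub>B\<^esub> a12 \<otimes>\<^bsub>B\<^esub> inv\<^bsub>B\<^esub> a22 = inv\<^bsub>B\<^esub> r1 \<otimes>\<^bsub>B\<^esub> commutator B f g"
  proof -
    have "a12 \<otimes>\<^bsub>B\<^esub> a21 \<otimes>\<^bsub>B\<^esub> inv\<^bsub>B\<^esub> a12 \<otimes>\<^bsub>B\<^esub> inv\<^bsub>B\<^esub> a22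
        = inv\<^bsub>B\<^esub> a22 \<otimes>\<^bsub>B\<^esub> g \<otimes>\<^bsub>B\<^esub> (a22 \<otimes>\<^bsub>B\<^esub> a21 \<otimes>\<^bsub>B\<^esub> inv\<^bsub>B\<^esub> a22) \<otimes>\<^bsub>B\<^esub> inv\<^bsub>B\<^esub> g"
      using assms(1,4,9) c by (simp add: conjugate_def m_assoc inv_mult_group)
    also have "\<dots> = inv\<^bsub>B\<^esub> r1 \<otimes>\<^bsub>B\<^esub> commutator B f g"
      unfolding e2 unfolding ia22 using assms(1-4) by (simp add: commutator_def m_assoc)
    finally show ?thesis .
  qed
  have i1: "inv\<^bsub>wreath_C2 B\<^esub> ((\<one>\<^bsub>B\<^esub>, a12), True) = ((inv\<^bsub>B\<^esub> a12, \<one>\<^bsub>B\<^esub>), True)"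
    using wr_inv[OF assms(1) one_closed c(3)] by simp
  have i2: "inv\<^bsub>wreath_C2 B\<^esub> ((a21, a22), False) = ((inv\<^bsub>B\<^esub> a21, inv\<^bsub>B\<^esub> a22), False)"
    using wr_inv[OF assms(1) c(1,2)] by simp
  show ?thesis
    unfolding commutator_def[of "wreath_C2 B"] i1 i2
    using assms(5) c e1 e3
    by (simp add: wreath_C2_def m_assoc)
qed

end
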